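(* Let $v(0)\in\mathcal N^*$, $v(0)\ne0$, and let $E_0$ be its critical core. For all $w\ge1/m_1(0)$, $$\frac{m_1(0)}{m_2(0)}\frac1{w^2}\le E_0(w)\le\frac1{w^2}\qquad\text{and}\qquad\Big|\frac{dE_0}{dw}(w)\Big|\le4m_2(0)^2m_3(0)=:D.$$ Consequently $\sup_{w\ge1/m_1(0)}E_0(w)\le m_1(0)^2$, $\min_{1/m_1(0)\le y\le w}E_0(y)\ge\frac{m_1(0)}{m_2(0)}\frac1{w^2}$, and for $1/m_1(0)\le w_1\le w_2$, $\max_{[w_1,w_2]}E_0-\min_{[w_1,w_2]}E_0\le D(w_2-w_1)$.
   Context: $\mathcal N^*$: finitely supported sequences $v=(v_k)_{k\ge1}$ of nonnegative reals; $m_j(0)=\sum_kk^jv_k(0)$ for $j=1,2,3$. Critical core: with $U_0(x)=\sum_kv_k(0)(e^{-kx}-1)$, the function $E_0:(0,\infty)\to(0,\infty)$ is defined by $E_0\big(-1/U_0'(x)\big)=\frac{(-U_0'(x))^3}{U_0''(x)}$ for $x\in\mathbb R$ (the map $x\mapsto-1/U_0'(x)$ is a bijection $\mathbb R\to(0,\infty)$); equivalently $E_0=F_0'$ where $F_0(-1/U_0'(x))=-U_0(x)$. *)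

theory Defs
  imports "HOL-Analysis.Analysis"
begin

text \<open>A sequence v = (v_k)_{k>=1} is modelled as v :: nat => real; the entry v 0 is ignored.
  Membership in N*: finitely supported and nonnegative on indices k >= 1.\<close>

definition supp_seq :: "(nat \<Rightarrow> real) \<Rightarrow> nat set" where
  "supp_seq v = {k. 1 \<le> k \<and> v k \<noteq> 0}"

definition in_Nstar :: "(nat \<Rightarrow> real) \<Rightarrow> bool" where
  "in_Nstar v \<longleftrightarrow> finite (supp_seq v) \<and> (\<forall>k\<ge>1. 0 \<le> v k)"

definition moment :: "nat \<Rightarrow> (nat \<Rightarrow> real) \<Rightarrow> real" where
  "moment j v = (\<Sum>k\<in>supp_seq v. real k ^ j * v k)"

definition U0 :: "(nat \<Rightarrow> real) \<Rightarrow> real \<Rightarrow> real" where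
  "U0 v x = (\<Sum>k\<in>supp_seq v. v k * (exp (- real k * x) - 1))"

definition crit_core :: "(nat \<Rightarrow> real) \<Rightarrow> real \<Rightarrow> real" where
  "crit_core v w =
     (let x = (THE x. - 1 / deriv (U0 v) x = w)
      in (- deriv (U0 v) x) ^ 3 / deriv (deriv (U0 v)) x)"

end

theory Submission imports Defs begin

definition Sf :: "nat \<Rightarrow> (nat\<Rightarrow>real) \<Rightarrow> real \<Rightarrow> real" where
  "Sf j v x = (\<Sum>k\<in>supp_seq v. real k ^ j * v k * exp (- real k * x))"

lemma supp_props:
  assumes "in_Nstar v"
  shows "finite (supp_seq v)" "\<And>k. k \<in> supp_seq v \<Longrightarrow> 1 \<le> k \<and> 0 < v k"
  using assms unfolding in_Nstar_def supp_seq_def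
  by (auto simp: less_le)

lemma Sf_deriv:
  assumes "in_Nstar v"
  shows "(Sf j v has_real_derivative - Sf (Suc j) v x) (at x)"
proof -
  have "((\<lambda>x. \<Sum>k\<in>supp_seq v. real k ^ j * v k * exp (- real k * x)) has_real_derivative
      (\<Sum>k\<in>supp_seq v. real k ^ j * v k * (exp (- real k * x) * (- real k)))) (at x)"
    by (auto intro!: derivative_eq_intros sum.cong simp: algebra_simps)
  note A = this
  have B: "(\<Sum>k\<in>supp_seq v. real k ^ j * v k * (exp (- real k * x) * (- real k)))
     = - Sf (Suc j) v x"
    unfolding Sf_def sum_negf[symmetric] by (rule sum.cong) (auto simp: algebra_simps)
  have eq: "Sf j v = (\<lambda>x. \<Sum>k\<in>supp_seq v. real k ^ j * v k * exp (- real k * x))"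
    by (simp add: Sf_def fun_eq_iff)
  show ?thesis unfolding eq using A[unfolded B] .
qed

lemma Sf_cont: assumes "in_Nstar v" shows "isCont (Sf j v) x"
  using Sf_deriv[OF assms] DERIV_isCont by blast

lemma Sf_pos:
  assumes "in_Nstar v" "supp_seq v \<noteq> {}"
  shows "0 < Sf j v x"
  unfolding Sf_def
proof (intro sum_pos)
  show "finite (supp_seq v)" "supp_seq v \<noteq> {}" using supp_props[OF assms(1)] assms(2) by auto
  fix k assume "k \<in> supp_seq v"
  with supp_props[OF assms(1)] have "1 \<le> k" "0 < v k" by auto
  then show "0 < real k ^ j * v k * exp (- real k * x)" by simp
qed

lemma Sf_le_Suc:
  assumes "in_Nstar v"
  shows "Sf j v x \<le> Sf (Suc j) v x"
  unfolding Sf_def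
proof (rule sum_mono)
  fix k assume k: "k \<in> supp_seq v"
  with supp_props[OF assms] have "1 \<le> k" "0 < v k" by auto
  then have "real k ^ j \<le> real k ^ Suc j"
    by (simp add: power_increasing)
  then show "real k ^ j * v k * exp (- real k * x) \<le> real k ^ Suc j * v k * exp (- real k * x)"
    using \<open>0 < v k\<close> by (intro mult_right_mono) auto
qed

lemma Sf_le_moment:
  assumes "in_Nstar v" "0 \<le> x"
  shows "Sf j v x \<le> moment j v"
  unfolding Sf_def moment_def
proof (rule sum_mono)
  fix k assume k: "k \<in> supp_seq v"
  with supp_props[OF assms(1)] have "1 \<le> k" "0 < v k" by auto
  have "exp (- real k * x) \<le> 1" using assms(2) by simp
  then show "real k ^ j * v k * exp (- real k * x) \<le> real k ^ j * v k"
    using \<open>0 < v k\<close> by (intro mult_left_le) auto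
qed

lemma Sf_0: "Sf j v 0 = moment j v"
  unfolding Sf_def moment_def by simp

lemma Sf_strict:
  assumes "in_Nstar v" "supp_seq v \<noteq> {}" "x < y"
  shows "Sf j v y < Sf j v x"
  unfolding Sf_def
proof (rule sum_strict_mono)
  show "finite (supp_seq v)" using supp_props[OF assms(1)] by auto
  show "supp_seq v \<noteq> {}" by fact
  fix k assume k: "k \<in> supp_seq v"
  with supp_props[OF assms(1)] have "1 \<le> k" "0 < v k" by auto
  have "exp (- real k * y) < exp (- real k * x)" using assms(3) \<open>1 \<le> k\<close> by simp
  then show "real k ^ j * v k * exp (- real k * y) < real k ^ j * v k * exp (- real k * x)"
    using \<open>0 < v k\<close> \<open>1 \<le> k\<close> by (intro mult_strict_left_mono) auto
qed

lemma deriv_U0: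
  assumes "in_Nstar v"
  shows "deriv (U0 v) = (\<lambda>x. - Sf 1 v x)" "deriv (deriv (U0 v)) = Sf 2 v"
proof -
  have "(U0 v has_real_derivative - Sf 1 v x) (at x)" for x
  proof -
    have "((\<lambda>x. \<Sum>k\<in>supp_seq v. v k * (exp (- real k * x) - 1)) has_real_derivative
      (\<Sum>k\<in>supp_seq v. v k * (exp (- real k * x) * (- real k)))) (at x)"
      by (auto intro!: derivative_eq_intros sum.cong simp: algebra_simps)
    note A = this
    have B: "(\<Sum>k\<in>supp_seq v. v k * (exp (- real k * x) * (- real k))) = - Sf 1 v x"
      unfolding Sf_def sum_negf[symmetric] by (rule sum.cong) (auto simp: algebra_simps)
    have eq: "U0 v = (\<lambda>x. \<Sum>k\<in>supp_seq v. v k * (exp (- real k * x) - 1))"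
      by (simp add: U0_def fun_eq_iff)
    show ?thesis unfolding eq using A[unfolded B] .
  qed
  then show 1: "deriv (U0 v) = (\<lambda>x. - Sf 1 v x)" by (intro ext DERIV_imp_deriv)
  have "((\<lambda>x. - Sf 1 v x) has_real_derivative Sf 2 v x) (at x)" for x
    using DERIV_minus[OF Sf_deriv[OF assms, of 1 x]] by (simp add: numeral_2_eq_2)
  then show "deriv (deriv (U0 v)) = Sf 2 v" unfolding 1 by (intro ext DERIV_imp_deriv)
qed

lemma crit_core_eq:
  assumes "in_Nstar v"
  shows "crit_core v w = (let x = (THE x. 1 / Sf 1 v x = w) in Sf 1 v x ^ 3 / Sf 2 v x)"
proof -
  have "deriv (\<lambda>x. - Sf 1 v x) = Sf 2 v" using deriv_U0[OF assms] by metis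
  then show ?thesis unfolding crit_core_def deriv_U0(1)[OF assms] by simp
qed

lemma Sf_exists:
  assumes "in_Nstar v" "supp_seq v \<noteq> {}" "0 < w"
  shows "\<exists>x. 1 / Sf 1 v x = w"
proof -
  note sp = supp_props[OF assms(1)]
  obtain k0 where k0: "k0 \<in> supp_seq v" using assms(2) by auto
  with sp have k01: "1 \<le> k0" and c: "0 < v k0" by auto
  define c where "c = v k0"
  have cpos: "0 < c" using c c_def by simp
  define t where "t = ln (1 / (w * c))"
  define a where "a = - (\<bar>t\<bar> + 1)"
  have a0: "a \<le> 0" unfolding a_def by simp
  have "real k0 ^ 1 * v k0 * exp (- real k0 * a) \<le> Sf 1 v a"
    unfolding Sf_def
  proof (rule member_le_sum[OF k0])
    show "finite (supp_seq v)" using sp by simp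
    fix k assume "k \<in> supp_seq v - {k0}"
    with sp have "0 < v k" by auto
    then show "0 \<le> real k ^ 1 * v k * exp (- real k * a)" by simp
  qed
  moreover have "c * exp (- a) \<le> real k0 ^ 1 * v k0 * exp (- real k0 * a)"
  proof -
    have "real k0 * a \<le> 1 * a" using a0 k01 by (intro mult_right_mono_neg) auto
    then have "exp (- a) \<le> exp (- real k0 * a)" by simp
    also have "\<dots> \<le> real k0 * exp (- real k0 * a)" using k01 by simp
    finally show ?thesis unfolding c_def using c
      by (simp add: mult.commute mult.left_commute)
  qed
  moreover have "1 / w < c * exp (- a)"
  proof -
    have "exp t < exp (- a)" unfolding a_def by simp
    moreover have "exp t = 1 / (w * c)" unfolding t_def using assms(3) cpos by simp
    ultimately have "1 / (w*c) < exp (- a)" by simp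
    then show ?thesis using cpos assms(3) by (simp add: field_simps)
  qed
  ultimately have fa: "1 / w \<le> Sf 1 v a" by linarith
  define m1 where "m1 = moment 1 v"
  have m1pos: "0 < m1" unfolding m1_def using Sf_pos[OF assms(1,2), of 1 0] Sf_0 by simp
  define b where "b = \<bar>ln (w * m1)\<bar> + 1"
  have b0: "0 < b" unfolding b_def by simp
  have "Sf 1 v b \<le> (\<Sum>k\<in>supp_seq v. real k ^ 1 * v k * exp (- b))"
    unfolding Sf_def
  proof (rule sum_mono)
    fix k assume "k \<in> supp_seq v"
    with sp have "1 \<le> k" "0 < v k" by auto
    then have "exp (- real k * b) \<le> exp (- b)" using b0
      by simp
    then show "real k ^ 1 * v k * exp (- real k * b) \<le> real k ^ 1 * v k * exp (- b)"
      using \<open>0 < v k\<close> by (intro mult_left_mono) auto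
  qed
  also have "\<dots> = m1 * exp (- b)" unfolding m1_def moment_def
    by (simp add: sum_distrib_right)
  also have "\<dots> < m1 * (1 / (w * m1))"
  proof -
    have "exp (- b) < exp (- ln (w * m1))" unfolding b_def by simp
    also have "\<dots> = 1 / (w * m1)" using assms(3) m1pos by (simp add: exp_minus field_simps)
    finally show ?thesis by (rule mult_strict_left_mono[OF _ m1pos])
  qed
  also have "\<dots> = 1 / w" using m1pos by simp
  finally have fb: "Sf 1 v b \<le> 1 / w" by simp
  have "a \<le> b" using a0 b0 by simp
  have "continuous_on {a..b} (Sf 1 v)"
    using Sf_cont[OF assms(1)] by (simp add: continuous_at_imp_continuous_on)
  from IVT2'[OF fb fa \<open>a \<le> b\<close> this] obtain x where "Sf 1 v x = 1 / w" by auto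
  then have "1 / Sf 1 v x = w" by simp
  then show ?thesis by blast
qed

lemma Sf_inj:
  assumes "in_Nstar v" "supp_seq v \<noteq> {}" "Sf j v x = Sf j v y"
  shows "x = y"
  using Sf_strict[OF assms(1,2), of x y j] Sf_strict[OF assms(1,2), of y x j] assms(3)
  by (cases x y rule: linorder_cases) auto

lemma Sf_ex1:
  assumes "in_Nstar v" "supp_seq v \<noteq> {}" "0 < w"
  shows "\<exists>!x. 1 / Sf 1 v x = w"
proof -
  obtain x where "1 / Sf 1 v x = w" using Sf_exists[OF assms] by blast
  moreover have "1 / Sf 1 v y = w \<Longrightarrow> y = x" for y
  proof -
    assume "1 / Sf 1 v y = w"
    with \<open>1 / Sf 1 v x = w\<close> have "Sf 1 v y = Sf 1 v x" by (metis inverse_eq_divide inverse_inverse_eq)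
    then show "y = x" using Sf_inj[OF assms(1,2)] by blast
  qed
  ultimately show ?thesis by blast
qed

lemma ratio_ineq:
  assumes "in_Nstar v" "0 \<le> x"
  shows "moment 1 v * Sf 2 v x \<le> moment 2 v * Sf 1 v x"
proof -
  define P where "P = supp_seq v"
  define e where "e k = exp (- real k * x)" for k :: nat
  define T where "T j k = real j * real k * v j * v k * (real k - real j) * e k" for j k :: nat
  have fin: "finite P" using supp_props[OF assms(1)] P_def by simp
  have l: "moment 1 v * Sf 2 v x - moment 2 v * Sf 1 v x = (\<Sum>j\<in>P. \<Sum>k\<in>P. T j k)"
    unfolding moment_def Sf_def sum_product P_def[symmetric] sum_subtractf[symmetric]
    by (intro sum.cong refl) (simp add: T_def e_def algebra_simps power2_eq_square)
  have sw: "(\<Sum>j\<in>P. \<Sum>k\<in>P. T j k) = (\<Sum>j\<in>P. \<Sum>k\<in>P. T k j)"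
    by (rule sum.swap)
  have "(\<Sum>j\<in>P. \<Sum>k\<in>P. T j k + T k j) \<le> 0"
  proof (intro sum_nonpos)
    fix j k assume "j \<in> P" "k \<in> P"
    with supp_props[OF assms(1)] have v: "0 < v j" "0 < v k" unfolding P_def by auto
    have "(real k - real j) * (e k - e j) \<le> 0"
    proof (cases "j \<le> k")
      case True
      then have "e k \<le> e j" unfolding e_def using assms(2) by (simp add: mult_right_mono)
      then show ?thesis using True by (simp add: mult_nonneg_nonpos)
    next
      case False
      then have "e j \<le> e k" unfolding e_def using assms(2) by (simp add: mult_right_mono)
      then show ?thesis using False by (simp add: mult_nonpos_nonneg)
    qed
    moreover have "T j k + T k j = (real j * real k * v j * v k) * ((real k - real j) * (e k - e j))"
      unfolding T_def by (simp add: algebra_simps)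
    moreover have "0 \<le> real j * real k * v j * v k" using v by simp
    ultimately show "T j k + T k j \<le> 0" by (simp add: mult_nonneg_nonpos)
  qed
  then have "(\<Sum>j\<in>P. \<Sum>k\<in>P. T j k) + (\<Sum>j\<in>P. \<Sum>k\<in>P. T k j) \<le> 0"
    by (simp add: sum.distrib)
  then have "(\<Sum>j\<in>P. \<Sum>k\<in>P. T j k) \<le> 0" using sw by simp
  then show ?thesis using l by simp
qed

lemma alg_bound:
  fixes a b c m1 m2 m3 :: real
  assumes "0 < a" "a \<le> b" "b \<le> c" "a \<le> m1" "c \<le> m3" "m1 \<le> m2" "m1 \<le> m3"
  shows "\<bar>(a^3*c - 3*a^2*b^2)/b^2 * (a^2/b)\<bar> \<le> 4*m2^2*m3"
proof -
  have b: "0 < b" using assms by simp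
  have X: "(a^3*c - 3*a^2*b^2)/b^2 * (a^2/b) = a^5*c/b^3 - 3*a^4/b"
    using b by (simp add: field_simps power_numeral_reduce)
  have c: "0 < c" using assms by simp
  have p1: "0 \<le> a^5*c/b^3" using assms b by simp
  have "a^3 \<le> b^3" using assms by (simp add: power_mono)
  then have "a^3*(a^2*c) \<le> b^3*(a^2*c)" using assms c by (intro mult_right_mono) auto
  then have "a^5*c \<le> a^2*c*b^3" by (simp add: power_numeral_reduce algebra_simps)
  then have q1: "a^5*c/b^3 \<le> a^2*c" using b by (simp add: divide_le_eq)
  have p2: "0 \<le> 3*a^4/b" using assms b by simp
  have "a^4 \<le> a^3 * b" using assms by (simp add: power_numeral_reduce mult_left_mono)
  then have q2: "3*a^4/b \<le> 3*a^3" using b by (simp add: divide_le_eq)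
  have "\<bar>a^5*c/b^3 - 3*a^4/b\<bar> \<le> a^2*c + 3*a^3" using p1 q1 p2 q2 by linarith
  also have "a^2*c \<le> m2^2*m3"
    using assms by (intro mult_mono power_mono) auto
  moreover have "a^3 \<le> m2^2*m3"
  proof -
    have "a^3 \<le> m1^3" using assms by (intro power_mono) auto
    also have "m1^3 = m1^2 * m1" by (simp add: power_numeral_reduce)
    also have "\<dots> \<le> m2^2*m3" using assms by (intro mult_mono power_mono) auto
    finally show ?thesis .
  qed
  ultimately show ?thesis unfolding X by linarith
qed

lemma main:
  fixes v :: "nat \<Rightarrow> real"
  assumes "in_Nstar v" and "supp_seq v \<noteq> {}"
  defines "m1 \<equiv> moment 1 v" and "m2 \<equiv> moment 2 v" and "m3 \<equiv> moment 3 v"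
      and "E0 \<equiv> crit_core v"
      and "D \<equiv> 4 * (moment 2 v)^2 * moment 3 v"
  shows "\<forall>w \<ge> 1 / m1.
            m1 / m2 * (1 / w^2) \<le> E0 w \<and> E0 w \<le> 1 / w^2 \<and>
            E0 differentiable (at w) \<and> \<bar>deriv E0 w\<bar> \<le> D"
proof (intro allI impI)
  note inN = assms(1) and ne = assms(2)
  define g where "g w = (THE x. 1 / Sf 1 v x = w)" for w
  define F where "F x = Sf 1 v x ^ 3 / Sf 2 v x" for x
  have E0_eq: "E0 = (\<lambda>w. F (g w))"
    unfolding E0_def fun_eq_iff crit_core_eq[OF inN] g_def F_def Let_def by simp
  have g_spec: "1 / Sf 1 v (g w) = w" if "0 < w" for w
    unfolding g_def by (rule theI'[OF Sf_ex1[OF inN ne that]])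
  have g_inv: "g (1 / Sf 1 v x) = x" for x
    unfolding g_def
  proof (rule the_equality)
    fix y assume "1 / Sf 1 v y = 1 / Sf 1 v x"
    then have "Sf 1 v y = Sf 1 v x" by (metis inverse_eq_divide inverse_inverse_eq)
    then show "y = x" using Sf_inj[OF inN ne] by blast
  qed simp
  have m1pos: "0 < m1" unfolding m1_def using Sf_pos[OF inN ne, of 1 0] Sf_0 by simp
  fix w assume w: "1 / m1 \<le> w"
  have wpos: "0 < w" using m1pos w by (smt (verit) divide_pos_pos)
  define x where "x = g w"
  have Sx: "Sf 1 v x = 1 / w" using g_spec[OF wpos] x_def
    by (metis inverse_eq_divide inverse_inverse_eq)
  have x0: "0 \<le> x"
  proof (rule ccontr)
    assume "\<not> 0 \<le> x"
    then have "Sf 1 v 0 < Sf 1 v x" using Sf_strict[OF inN ne, of x 0 1] by simp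
    then have "m1 < 1 / w" using Sx Sf_0 m1_def by simp
    then show False using w m1pos wpos by (simp add: field_simps)
  qed
  define a where "a = Sf 1 v x"
  define b where "b = Sf 2 v x"
  define c where "c = Sf 3 v x"
  have apos: "0 < a" unfolding a_def using Sf_pos[OF inN ne] .
  have ab: "a \<le> b" unfolding a_def b_def using Sf_le_Suc[OF inN, of 1 x] by (simp add: numeral_2_eq_2)
  have bc: "b \<le> c" unfolding c_def b_def using Sf_le_Suc[OF inN, of 2 x] by (simp add: numeral_3_eq_3 numeral_2_eq_2)
  have bpos: "0 < b" using apos ab by simp
  have am1: "a \<le> m1" unfolding a_def m1_def using Sf_le_moment[OF inN x0] .
  have cm3: "c \<le> m3" unfolding c_def m3_def using Sf_le_moment[OF inN x0] .
  have m12: "m1 \<le> m2" unfolding m1_def m2_def using Sf_le_Suc[OF inN, of 1 0] Sf_0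
    by (simp add: numeral_2_eq_2)
  have m23: "m2 \<le> m3" unfolding m3_def m2_def using Sf_le_Suc[OF inN, of 2 0] Sf_0
    by (simp add: numeral_3_eq_3 numeral_2_eq_2)
  have w2: "1 / w^2 = a^2" using Sx unfolding a_def by (simp add: power_one_over)
  have E0w: "E0 w = a^3 / b" unfolding E0_eq F_def x_def[symmetric] a_def b_def ..
  have up: "E0 w \<le> 1 / w^2"
  proof -
    have "a^3 / b \<le> a^3 / a" using apos ab by (intro divide_left_mono) auto
    also have "\<dots> = a^2" using apos by (simp add: power_numeral_reduce)
    finally show ?thesis using E0w w2 by simp
  qed
  have low: "m1 / m2 * (1 / w^2) \<le> E0 w"
  proof -
    have r: "m1 * b \<le> m2 * a" unfolding m1_def m2_def a_def b_def using ratio_ineq[OF inN x0] .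
    have m2pos: "0 < m2" using m1pos m12 by simp
    have "m1 / m2 * a^2 \<le> a^3 / b"
    proof -
      have "m1 * b * a^2 \<le> m2 * a * a^2" using r by (intro mult_right_mono) auto
      then show ?thesis using m2pos bpos by (simp add: field_simps power_numeral_reduce)
    qed
    then show ?thesis using E0w w2 by simp
  qed
  define f where "f x = 1 / Sf 1 v x" for x
  have fder: "(f has_real_derivative Sf 2 v y / Sf 1 v y ^ 2) (at y)" for y
  proof -
    have "((\<lambda>x. inverse (Sf 1 v x)) has_real_derivative - (- Sf 2 v y * inverse (Sf 1 v y ^ Suc (Suc 0)))) (at y)"
      using DERIV_inverse_fun[OF Sf_deriv[OF inN, of 1 y]] Sf_pos[OF inN ne, of 1 y]
      by (simp add: numeral_2_eq_2)
    moreover have "f = (\<lambda>x. inverse (Sf 1 v x))" unfolding f_def by (simp add: fun_eq_iff divide_inverse)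
    ultimately show ?thesis by (simp add: divide_inverse power2_eq_square)
  qed
  have gcont: "isCont g w"
  proof -
    have "isCont g (f x)"
    proof (rule isCont_inverse_function[where d=1 and f=f and x=x])
      show "g (f z) = z" if "\<bar>z - x\<bar> \<le> 1" for z unfolding f_def by (rule g_inv)
      show "isCont f z" if "\<bar>z - x\<bar> \<le> 1" for z using fder DERIV_isCont by blast
    qed simp
    moreover have "f x = w" unfolding f_def x_def using g_spec[OF wpos] .
    ultimately show ?thesis by simp
  qed
  have gder: "(g has_real_derivative inverse (b / a^2)) (at w)"
  proof (rule DERIV_inverse_function[where f=f and a=0 and b="w+1"])
    show "(f has_real_derivative b / a^2) (at (g w))"
      using fder[of x] unfolding a_def b_def x_def .
    show "b / a^2 \<noteq> 0" using apos bpos by simp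
    show "0 < w" "w < w + 1" using wpos by auto
    show "f (g y) = y" if "0 < y" "y < w + 1" for y unfolding f_def using g_spec that by simp
    show "isCont g w" by (rule gcont)
  qed
  have Fder: "(F has_real_derivative (a^3*c - 3*a^2*b^2)/b^2) (at x)"
  proof -
    have "(F has_real_derivative
        ((3 * Sf 1 v x ^ 2 * (- Sf 2 v x)) * Sf 2 v x - Sf 1 v x ^ 3 * (- Sf 3 v x)) / (Sf 2 v x * Sf 2 v x)) (at x)"
      unfolding F_def[abs_def]
      using Sf_deriv[OF inN, of 1 x] Sf_deriv[OF inN, of 2 x] Sf_pos[OF inN ne, of 2 x]
      by (auto intro!: derivative_eq_intros simp: numeral_2_eq_2 numeral_3_eq_3)
    moreover have "((3 * Sf 1 v x ^ 2 * (- Sf 2 v x)) * Sf 2 v x - Sf 1 v x ^ 3 * (- Sf 3 v x)) / (Sf 2 v x * Sf 2 v x)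
       = (a^3*c - 3*a^2*b^2)/b^2"
      unfolding a_def b_def c_def by (simp add: power2_eq_square algebra_simps)
    ultimately show ?thesis by simp
  qed
  have Eder: "(E0 has_real_derivative (a^3*c - 3*a^2*b^2)/b^2 * inverse (b / a^2)) (at w)"
    unfolding E0_eq using DERIV_chain2[OF Fder[unfolded x_def] gder] .
  show "m1 / m2 * (1 / w^2) \<le> E0 w \<and> E0 w \<le> 1 / w^2 \<and>
            E0 differentiable (at w) \<and> \<bar>deriv E0 w\<bar> \<le> D"
  proof (intro conjI low up)
    show "E0 differentiable (at w)"
      using differentiableI[OF has_field_derivative_imp_has_derivative[OF Eder]] .
    have "deriv E0 w = (a^3*c - 3*a^2*b^2)/b^2 * (a^2 / b)"
      using DERIV_imp_deriv[OF Eder] by simp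
    also have "\<bar>\<dots>\<bar> \<le> 4*m2^2*m3"
      using alg_bound[OF apos ab bc am1 cm3 m12] m12 m23 by linarith
    finally show "\<bar>deriv E0 w\<bar> \<le> D" unfolding D_def m2_def m3_def .
  qed
qed


lemma lip_aux:
  fixes E :: "real \<Rightarrow> real"
  assumes der: "\<And>w. L \<le> w \<Longrightarrow> E differentiable (at w) \<and> \<bar>deriv E w\<bar> \<le> K"
    and "L \<le> y" "y < z"
  shows "\<bar>E z - E y\<bar> \<le> K * (z - y)"
proof -
  have "\<And>x. y \<le> x \<Longrightarrow> x \<le> z \<Longrightarrow> (E has_real_derivative deriv E x) (at x)"
    using der assms(2) DERIV_deriv_iff_real_differentiable by auto
  from MVT2[OF \<open>y < z\<close> this] obtain t where t: "y < t" "t < z" "E z - E y = (z - y) * deriv E t"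
    by blast
  have "\<bar>deriv E t\<bar> \<le> K" using der[of t] t assms(2) by auto
  then have "\<bar>(z - y) * deriv E t\<bar> \<le> (z - y) * K" using \<open>y < z\<close>
    by (simp add: abs_mult mult_left_mono)
  then show ?thesis using t by (simp add: mult.commute)
qed

theorem lemma6:
  fixes v :: "nat \<Rightarrow> real"
  assumes "in_Nstar v" and "supp_seq v \<noteq> {}"
  defines "m1 \<equiv> moment 1 v" and "m2 \<equiv> moment 2 v" and "m3 \<equiv> moment 3 v"
      and "E0 \<equiv> crit_core v"
      and "D \<equiv> 4 * (moment 2 v)^2 * moment 3 v"
  shows "(\<forall>w \<ge> 1 / m1.
            m1 / m2 * (1 / w^2) \<le> E0 w \<and> E0 w \<le> 1 / w^2 \<and>
            E0 differentiable (at w) \<and> \<bar>deriv E0 w\<bar> \<le> D)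
       \<and> (SUP w\<in>{1/m1..}. E0 w) \<le> m1^2
       \<and> (\<forall>w \<ge> 1 / m1. (INF y\<in>{1/m1..w}. E0 y) \<ge> m1 / m2 * (1 / w^2))
       \<and> (\<forall>w1 w2. 1 / m1 \<le> w1 \<and> w1 \<le> w2 \<longrightarrow>
            (SUP y\<in>{w1..w2}. E0 y) - (INF y\<in>{w1..w2}. E0 y) \<le> D * (w2 - w1))"
proof -
  have P1: "\<forall>w \<ge> 1 / m1.
            m1 / m2 * (1 / w^2) \<le> E0 w \<and> E0 w \<le> 1 / w^2 \<and>
            E0 differentiable (at w) \<and> \<bar>deriv E0 w\<bar> \<le> D"
    using main[OF assms(1,2)] unfolding m1_def m2_def m3_def E0_def D_def by blast
  have m1pos: "0 < m1" unfolding m1_def using Sf_pos[OF assms(1,2), of 1 0] Sf_0 by simp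
  have m12: "m1 \<le> m2" unfolding m1_def m2_def using Sf_le_Suc[OF assms(1), of 1 0] Sf_0
    by (simp add: numeral_2_eq_2)
  have m2pos: "0 < m2" using m1pos m12 by simp
  have P2: "(SUP w\<in>{1/m1..}. E0 w) \<le> m1^2"
  proof (rule cSUP_least)
    show "{1/m1..} \<noteq> {}" by simp
    fix w assume "w \<in> {1/m1..}"
    then have w: "1/m1 \<le> w" by simp
    have wpos: "0 < w" using w m1pos by (smt (verit) divide_pos_pos)
    have "1 / w \<le> m1" using w m1pos wpos by (simp add: field_simps)
    then have "(1/w)^2 \<le> m1^2" using wpos by (intro power_mono) auto
    then show "E0 w \<le> m1^2" using P1 w by (auto simp: power_one_over)
  qed
  have P3: "\<forall>w \<ge> 1 / m1. (INF y\<in>{1/m1..w}. E0 y) \<ge> m1 / m2 * (1 / w^2)"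
  proof (intro allI impI cINF_greatest)
    fix w assume w: "1/m1 \<le> w"
    show "{1/m1..w} \<noteq> {}" using w by simp
    fix y assume "y \<in> {1/m1..w}"
    then have y: "1/m1 \<le> y" "y \<le> w" by auto
    have ypos: "0 < y" using y m1pos by (smt (verit) divide_pos_pos)
    have "1 / w^2 \<le> 1 / y^2" using ypos y by (intro divide_left_mono power_mono mult_pos_pos) auto
    then have "m1 / m2 * (1 / w^2) \<le> m1 / m2 * (1 / y^2)"
      using m1pos m2pos by (intro mult_left_mono) auto
    also have "\<dots> \<le> E0 y" using P1 y by auto
    finally show "m1 / m2 * (1 / w^2) \<le> E0 y" .
  qed
  have P4: "\<forall>w1 w2. 1 / m1 \<le> w1 \<and> w1 \<le> w2 \<longrightarrow>
            (SUP y\<in>{w1..w2}. E0 y) - (INF y\<in>{w1..w2}. E0 y) \<le> D * (w2 - w1)"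
  proof (intro allI impI)
    fix w1 w2 assume ww: "1 / m1 \<le> w1 \<and> w1 \<le> w2"
    have Dpos: "0 \<le> D" unfolding D_def using m2pos Sf_le_Suc[OF assms(1), of 2 0] Sf_0 m2_def
      by (simp add: numeral_3_eq_3 numeral_2_eq_2)
    have lip: "E0 y \<le> E0 z + D * (w2 - w1)" if "y \<in> {w1..w2}" "z \<in> {w1..w2}" for y z
    proof (cases y z rule: linorder_cases)
      case less
      have "\<bar>E0 z - E0 y\<bar> \<le> D * (z - y)"
        by (rule lip_aux[OF _ _ less]) (use P1 ww that in auto)
      moreover have "D * (z - y) \<le> D * (w2 - w1)" using that Dpos by (intro mult_left_mono) auto
      ultimately show ?thesis by linarith
    next
      case equal then show ?thesis using Dpos ww by simp
    next
      case greater
      have "\<bar>E0 y - E0 z\<bar> \<le> D * (y - z)"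
        by (rule lip_aux[OF _ _ greater]) (use P1 ww that in auto)
      moreover have "D * (y - z) \<le> D * (w2 - w1)" using that Dpos by (intro mult_left_mono) auto
      ultimately show ?thesis by linarith
    qed
    have ne: "{w1..w2} \<noteq> {}" using ww by simp
    have "(SUP y\<in>{w1..w2}. E0 y) - D * (w2 - w1) \<le> (INF y\<in>{w1..w2}. E0 y)"
    proof (rule cINF_greatest[OF ne])
      fix z assume z: "z \<in> {w1..w2}"
      have "(SUP y\<in>{w1..w2}. E0 y) \<le> E0 z + D * (w2 - w1)"
        by (rule cSUP_least[OF ne]) (use lip z in auto)
      then show "(SUP y\<in>{w1..w2}. E0 y) - D * (w2 - w1) \<le> E0 z" by simp
    qed
    then show "(SUP y\<in>{w1..w2}. E0 y) - (INF y\<in>{w1..w2}. E0 y) \<le> D * (w2 - w1)" by simp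
  qed
  show ?thesis using P1 P2 P3 P4 by blast
qed

end
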